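(* Let $n\ge 1$ and let $a_i=F_{i+2}-i-2$ for $i\ge 1$. Every game path of the Zeckendorf game on $n$ (starting from $\{F_1^n\}$) has length at most $\sum_{i=1}^{i_{\max}(n)} a_i\,\delta_i$, and $$\sum_{i=1}^{i_{\max}(n)} a_i\,\delta_i\ \le\ \frac{3+\sqrt5}{2}\,n-IZ(n)-\frac{1+\sqrt5}{2}\,Z(n).$$
   Context: Fibonacci numbers are indexed by $F_1=1$, $F_2=2$, $F_{i+1}=F_i+F_{i-1}$. A game state is a finite multiset of Fibonacci numbers (tracked by index); $\{F_1^n\}$ denotes $n$ copies of $F_1$. The legal moves are: $C_1$: replace $F_1,F_1$ by $F_2$; for $i\ge 2$, $C_i$: replace $F_{i-1},F_i$ by $F_{i+1}$; $S_2$: replace $F_2,F_2$ by $F_1,F_3$; for $i\ge 3$, $S_i$: replace $F_i,F_i$ by $F_{i-2},F_{i+1}$. The game on $n$ starts at $\{F_1^n\}$ and a game path is a sequence of legal moves continued until no legal move is available, which happens exactly at the Zeckendorf decomposition of $n$ (the unique representation of $n$ as a sum of $F_i$'s with distinct, pairwise non-consecutive indices); the length of a path is its number of moves. Write the Zeckendorf decomposition as $n=\sum_{i=1}^{i_{\max}(n)}\delta_i F_i$ with $\delta_i\in\{0,1\}$ and $i_{\max}(n)$ the largest index occurring; $Z(n)=\sum_i\delta_i$ and $IZ(n)=\sum_i i\,\delta_i$. *)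

theory Defs
  imports Complex_Main "HOL-Library.Multiset"
begin

text \<open>Fibonacci numbers with the paper's indexing: F 1 = 1, F 2 = 2, F (i+1) = F i + F (i-1).
  Index 0 is unused (value irrelevant).\<close>
fun F :: "nat \<Rightarrow> nat" where
  "F 0 = 1"
| "F (Suc 0) = 1"
| "F (Suc (Suc 0)) = 2"
| "F (Suc (Suc (Suc i))) = F (Suc (Suc i)) + F (Suc i)"

text \<open>A game state is a multiset of Fibonacci indices. One legal move.\<close>
definition zmove :: "nat multiset \<Rightarrow> nat multiset \<Rightarrow> bool" where
  "zmove A B \<longleftrightarrow>
     ({#1, 1#} \<subseteq># A \<and> B = A - {#1, 1#} + {#2#})
   \<or> (\<exists>i\<ge>2. {#i - 1, i#} \<subseteq># A \<and> B = A - {#i - 1, i#} + {#i + 1#})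
   \<or> ({#2, 2#} \<subseteq># A \<and> B = A - {#2, 2#} + {#1, 3#})
   \<or> (\<exists>i\<ge>3. {#i, i#} \<subseteq># A \<and> B = A - {#i, i#} + {#i - 2, i + 1#})"

text \<open>A game path on n: the list of successive states, starting at {F_1^n},
  each step a legal move, ending when no legal move is available.
  Its length (number of moves) is length ss - 1.\<close>
definition game_path :: "nat \<Rightarrow> nat multiset list \<Rightarrow> bool" where
  "game_path n ss \<longleftrightarrow> ss \<noteq> [] \<and> hd ss = replicate_mset n 1
     \<and> (\<forall>k. Suc k < length ss \<longrightarrow> zmove (ss ! k) (ss ! Suc k))
     \<and> \<not> (\<exists>B. zmove (last ss) B)"

definition zeck :: "nat \<Rightarrow> nat set" where
  "zeck n = (THE S. finite S \<and> 0 \<notin> S \<and> (\<forall>i\<in>S. Suc i \<notin> S) \<and> (\<Sum>i\<in>S. F i) = n)"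

definition delta :: "nat \<Rightarrow> nat \<Rightarrow> nat" where
  "delta n i = (if i \<in> zeck n then 1 else 0)"

definition imax :: "nat \<Rightarrow> nat" where
  "imax n = Max (zeck n)"

definition Z :: "nat \<Rightarrow> nat" where
  "Z n = (\<Sum>i\<in>{1..imax n}. delta n i)"

definition IZ :: "nat \<Rightarrow> nat" where
  "IZ n = (\<Sum>i\<in>{1..imax n}. i * delta n i)"

definition a :: "nat \<Rightarrow> int" where
  "a i = int (F (i + 2)) - int i - 2"

end

theory Submission imports Defs begin

lemma Frec: "F (Suc (Suc k)) = F (Suc k) + F k"
  by (cases k rule: F.cases) auto

lemma F_pos: "F i \<ge> 1"
  by (induction i rule: F.induct) auto

lemma F_mono_Suc: "F i \<le> F (Suc i)"
  by (cases i) (auto simp: Frec)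

lemma F_mono: "i \<le> j \<Longrightarrow> F i \<le> F j"
  by (induction j rule: dec_induct) (auto intro: order_trans F_mono_Suc)

lemma sub2: "{#x, x#} \<subseteq># A \<longleftrightarrow> 2 \<le> count A x"
  by (auto simp: subseteq_mset_def)

lemma subxy: "x \<noteq> y \<Longrightarrow> {#x, y#} \<subseteq># A \<longleftrightarrow> x \<in># A \<and> y \<in># A"
  by (auto simp: subseteq_mset_def)

lemma sum_move:
  fixes f :: "nat \<Rightarrow> 'b::comm_monoid_add"
  assumes "M \<subseteq># A"
  shows "sum_mset (image_mset f (A - M + N)) + sum_mset (image_mset f M)
       = sum_mset (image_mset f A) + sum_mset (image_mset f N)"
proof -
  have "A = (A - M) + M" using assms by simp
  then have "sum_mset (image_mset f A) = sum_mset (image_mset f (A - M)) + sum_mset (image_mset f M)"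
    by (metis image_mset_union sum_mset.union)
  then show ?thesis by (simp add: algebra_simps)
qed

definition Phi :: "nat multiset \<Rightarrow> int" where
  "Phi A = sum_mset (image_mset a A)"
definition FS :: "nat multiset \<Rightarrow> nat" where
  "FS A = sum_mset (image_mset F A)"

lemma move_inv:
  assumes "zmove A B" "0 \<notin># A"
  shows "Phi B \<ge> Phi A + 1 \<and> FS B = FS A \<and> 0 \<notin># B"
  using assms(1) unfolding zmove_def
proof (elim disjE exE conjE)
  assume h: "{#1, 1#} \<subseteq># A" "B = A - {#1, 1#} + {#2#}"
  show ?thesis using sum_move[OF h(1), of a "{#2#}"] sum_move[OF h(1), of F "{#2#}"] h assms(2)
    by (auto simp: Phi_def FS_def a_def numeral_eq_Suc Frec in_diff_count)
next
  fix i assume h: "i \<ge> 2" "{#i - 1, i#} \<subseteq># A" "B = A - {#i - 1, i#} + {#i + 1#}"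
  obtain k where k: "i = Suc (Suc k)" using h(1) by (intro that[of "i - 2"]) simp
  show ?thesis using sum_move[OF h(2), of a "{#i+1#}"] sum_move[OF h(2), of F "{#i+1#}"] h assms(2)
    by (auto simp: Phi_def FS_def a_def k Frec in_diff_count)
next
  assume h: "{#2, 2#} \<subseteq># A" "B = A - {#2, 2#} + {#1, 3#}"
  show ?thesis using sum_move[OF h(1), of a "{#1,3#}"] sum_move[OF h(1), of F "{#1,3#}"] h assms(2)
    by (auto simp: Phi_def FS_def a_def numeral_eq_Suc Frec in_diff_count)
next
  fix i assume h: "i \<ge> 3" "{#i, i#} \<subseteq># A" "B = A - {#i, i#} + {#i - 2, i + 1#}"
  obtain k where k: "i = Suc (Suc (Suc k))" using h(1) by (intro that[of "i - 3"]) simp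
  show ?thesis using sum_move[OF h(2), of a "{#i-2, i+1#}"] sum_move[OF h(2), of F "{#i-2,i+1#}"] h assms(2)
    by (auto simp: Phi_def FS_def a_def k Frec in_diff_count)
qed


definition ZP :: "nat \<Rightarrow> nat set \<Rightarrow> bool" where
  "ZP n S \<longleftrightarrow> finite S \<and> 0 \<notin> S \<and> (\<forall>i\<in>S. Suc i \<notin> S) \<and> (\<Sum>i\<in>S. F i) = n"

lemma zbound:
  "finite S \<Longrightarrow> S \<noteq> {} \<Longrightarrow> 0 \<notin> S \<Longrightarrow> (\<forall>i\<in>S. Suc i \<notin> S) \<Longrightarrow> (\<Sum>i\<in>S. F i) < F (Suc (Max S))"
proof (induction "card S" arbitrary: S rule: less_induct)
  case less
  define m where "m = Max S"
  have mS: "m \<in> S" using less.prems m_def by simp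
  define T where "T = S - {m}"
  have sumS: "(\<Sum>i\<in>S. F i) = F m + (\<Sum>i\<in>T. F i)"
    using less.prems mS T_def by (simp add: sum.remove)
  show ?case
  proof (cases "T = {}")
    case True
    have "m \<noteq> 0" using mS less.prems by auto
    then obtain j where j: "m = Suc j" by (cases m) auto
    have "F (Suc m) = F m + F j" using j Frec by simp
    then show ?thesis using sumS True F_pos[of j] m_def by simp
  next
    case False
    have fT: "finite T" using less.prems T_def by simp
    have cT: "card T < card S" using less.prems mS T_def by (simp add: card_gt_0_iff)
    have nc: "\<forall>i\<in>T. Suc i \<notin> T" using less.prems T_def by auto
    have z: "0 \<notin> T" using less.prems T_def by auto
    have IH: "(\<Sum>i\<in>T. F i) < F (Suc (Max T))" using less.hyps[OF cT fT False z nc] .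
    have "Max T \<in> T" using fT False by simp
    then have MT: "Max T \<in> S" "Max T \<noteq> m" using T_def by auto
    then have "Max T \<le> m" using m_def less.prems by simp
    then have "Max T < m" using MT by simp
    have "Suc (Max T) \<noteq> m" using MT less.prems mS by auto
    then have "Max T \<noteq> m - 1" using \<open>Max T < m\<close> by linarith
    then have "Suc (Max T) \<le> m - 1" using \<open>Max T < m\<close> by linarith
    then have "F (Suc (Max T)) \<le> F (m - 1)" by (rule F_mono)
    moreover have "F (Suc m) = F m + F (m - 1)"
      using \<open>Max T < m\<close> by (cases m) (auto simp: Frec)
    ultimately show ?thesis using sumS IH m_def by simp
  qed
qed

lemma zuniq: "ZP n S \<Longrightarrow> ZP n T \<Longrightarrow> S = T"
proof (induction "card S" arbitrary: S T n rule: less_induct)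
  case less
  show ?case
  proof (cases "S = {} \<or> T = {}")
    case True
    then show ?thesis
    proof
      assume "S = {}"
      then have "n = 0" using less.prems ZP_def by auto
      then have "sum F T = 0" using less.prems ZP_def by auto
      moreover have "finite T" using less.prems ZP_def by auto
      ultimately have "\<forall>x\<in>T. F x = 0" by simp
      then have "T = {}" using F_pos by (metis all_not_in_conv not_one_le_zero)
      then show ?thesis using \<open>S = {}\<close> by simp
    next
      assume "T = {}"
      then have "n = 0" using less.prems ZP_def by auto
      then have "sum F S = 0" using less.prems ZP_def by auto
      moreover have "finite S" using less.prems ZP_def by auto
      ultimately have "\<forall>x\<in>S. F x = 0" by simp
      then have "S = {}" using F_pos by (metis all_not_in_conv not_one_le_zero)
      then show ?thesis using \<open>T = {}\<close> by simp
    qed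
  next
    case False
    then have ne: "S \<noteq> {}" "T \<noteq> {}" by auto
    have fS: "finite S" and fT: "finite T" using less.prems ZP_def by auto
    have ncS: "\<forall>i\<in>S. Suc i \<notin> S" and ncT: "\<forall>i\<in>T. Suc i \<notin> T" using less.prems ZP_def by auto
    have sS: "(\<Sum>i\<in>S. F i) = n" and sT: "(\<Sum>i\<in>T. F i) = n" using less.prems ZP_def by auto
    have z0S: "0 \<notin> S" and z0T: "0 \<notin> T" using less.prems ZP_def by auto
    have bS: "n < F (Suc (Max S))" using zbound[OF fS ne(1) z0S ncS] sS by simp
    have bT: "n < F (Suc (Max T))" using zbound[OF fT ne(2) z0T ncT] sT by simp
    have "Max S \<in> S" using fS ne by simp
    then have lS: "F (Max S) \<le> n" using sum.remove[OF fS, of "Max S" F] sS by simp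
    have "Max T \<in> T" using fT ne by simp
    then have lT: "F (Max T) \<le> n" using sum.remove[OF fT, of "Max T" F] sT by simp
    have eq: "Max S = Max T"
    proof (rule ccontr)
      assume "Max S \<noteq> Max T"
      then have "Suc (Max S) \<le> Max T \<or> Suc (Max T) \<le> Max S" by linarith
      then show False
      proof
        assume "Suc (Max S) \<le> Max T"
        then have "F (Suc (Max S)) \<le> F (Max T)" by (rule F_mono)
        then show False using bS lT by simp
      next
        assume "Suc (Max T) \<le> Max S"
        then have "F (Suc (Max T)) \<le> F (Max S)" by (rule F_mono)
        then show False using bT lS by simp
      qed
    qed
    define m where "m = Max S"
    have mS: "m \<in> S" using m_def fS ne by simp
    have mT: "m \<in> T" using m_def eq fT ne by simp
    have zS: "ZP (n - F m) (S - {m})" using z0S ncS mS sS fS sum.remove[OF fS mS, of F] unfolding ZP_def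
      by auto
    have zT: "ZP (n - F m) (T - {m})" using z0T ncT mT sT fT sum.remove[OF fT mT, of F] unfolding ZP_def
      by auto
    have "card (S - {m}) < card S" using fS mS by (rule card_Diff1_less)
    then have "S - {m} = T - {m}" using less.hyps zS zT by metis
    then show ?thesis using mS mT by blast
  qed
qed

lemma zeck_eq: "ZP n S \<Longrightarrow> zeck n = S"
  unfolding zeck_def
proof (rule the_equality)
  assume "ZP n S" then show "finite S \<and> 0 \<notin> S \<and> (\<forall>i\<in>S. Suc i \<notin> S) \<and> (\<Sum>i\<in>S. F i) = n"
    by (simp add: ZP_def)
next
  fix T assume "ZP n S" "finite T \<and> 0 \<notin> T \<and> (\<forall>i\<in>T. Suc i \<notin> T) \<and> (\<Sum>i\<in>T. F i) = n"
  then show "T = S" using zuniq[of n T S] by (simp add: ZP_def)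
qed


lemma zm1: "{#1,1#} \<subseteq># A \<Longrightarrow> zmove A (A - {#1,1#} + {#2#})"
  unfolding zmove_def by (rule disjI1) (rule conjI, assumption, rule refl)
lemma zmC: "i \<ge> 2 \<Longrightarrow> {#i-1,i#} \<subseteq># A \<Longrightarrow> zmove A (A - {#i-1,i#} + {#i+1#})"
  unfolding zmove_def by (rule disjI2, rule disjI1, rule exI[of _ i]) (intro conjI, assumption+, rule refl)
lemma zm2: "{#2,2#} \<subseteq># A \<Longrightarrow> zmove A (A - {#2,2#} + {#1,3#})"
  unfolding zmove_def by (rule disjI2, rule disjI2, rule disjI1) (rule conjI, assumption, rule refl)
lemma zmS: "i \<ge> 3 \<Longrightarrow> {#i,i#} \<subseteq># A \<Longrightarrow> zmove A (A - {#i,i#} + {#i-2,i+1#})"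
  unfolding zmove_def by (rule disjI2, rule disjI2, rule disjI2, rule exI[of _ i]) (intro conjI, assumption+, rule refl)

lemma terminal:
  assumes "\<not> (\<exists>B. zmove L B)" "0 \<notin># L"
  shows "(\<forall>x. count L x \<le> 1) \<and> (\<forall>i. i \<in># L \<longrightarrow> Suc i \<notin># L)"
proof (intro conjI allI impI)
  fix x show "count L x \<le> 1"
  proof (rule ccontr)
    assume "\<not> count L x \<le> 1"
    then have "2 \<le> count L x" by simp
    then have c: "{#x, x#} \<subseteq># L" using sub2[of x L] by simp
    have "count L x > 0" using \<open>2 \<le> count L x\<close> by linarith
    then have "x \<in># L" by simp
    then have "x \<noteq> 0" using assms(2) by metis
    then consider "x = 1" | "x = 2" | "x \<ge> 3" by linarith
    then show False
    proof cases
      case 1 then have "{#1, 1#} \<subseteq># L" using c by simp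
      then have "zmove L (L - {#1, 1#} + {#2#})" by (rule zm1)
      with assms(1) show False by (rule notE[OF _ exI])
    next
      case 2 then have "{#2, 2#} \<subseteq># L" using c by simp
      then have "zmove L (L - {#2, 2#} + {#1, 3#})" by (rule zm2)
      with assms(1) show False by (rule notE[OF _ exI])
    next
      case 3 then have "zmove L (L - {#x, x#} + {#x - 2, x + 1#})" using c by (rule zmS)
      with assms(1) show False by (rule notE[OF _ exI])
    qed
  qed
next
  fix i assume i: "i \<in># L" show "Suc i \<notin># L"
  proof
    assume s: "Suc i \<in># L"
    have "i \<noteq> 0" using i assms(2) by metis
    then have ge: "Suc i \<ge> 2" by simp
    have "{#Suc i - 1, Suc i#} \<subseteq># L" using subxy[of i "Suc i" L] i s by simp
    then have "zmove L (L - {#Suc i - 1, Suc i#} + {#Suc i + 1#})" using zmC[OF ge] by simp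
    with assms(1) show False by (rule notE[OF _ exI])
  qed
qed

lemma path_inv:
  assumes "game_path n ss" "k < length ss"
  shows "Phi (ss ! k) \<ge> int k \<and> FS (ss ! k) = n \<and> 0 \<notin># ss ! k"
  using assms(2)
proof (induction k)
  case 0
  have "ss ! 0 = replicate_mset n 1" using assms(1) unfolding game_path_def by (metis hd_conv_nth)
  then show ?case by (simp add: Phi_def FS_def a_def numeral_eq_Suc)
next
  case (Suc k)
  then have IH: "Phi (ss ! k) \<ge> int k \<and> FS (ss ! k) = n \<and> 0 \<notin># ss ! k" by simp
  have "zmove (ss ! k) (ss ! Suc k)" using assms(1) Suc.prems unfolding game_path_def by blast
  from move_inv[OF this] IH show ?case by auto
qed

lemma sq5: "sqrt 5 * sqrt 5 = (5::real)" by simp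

lemma rpow: "(r::real)^2 = r + 1 \<Longrightarrow> r^(i+3) = r^(i+2) + r^(i+1)"
proof -
  assume h: "r^2 = r + 1"
  have e: "i+3 = (i+1)+2" by simp
  have "r^(i+3) = r^(i+1) * r^2" unfolding e by (rule power_add)
  also have "\<dots> = r^(i+1) * r + r^(i+1)" using h by (simp add: algebra_simps)
  also have "\<dots> = r^(i+2) + r^(i+1)" by (simp add: power_add)
  finally show ?thesis .
qed

lemma ekey: "real (F (i+2)) - (3 + sqrt 5)/2 * real (F i) = ((1 - sqrt 5)/2) ^ (i+1)
   \<and> real (F (i+3)) - (3 + sqrt 5)/2 * real (F (i+1)) = ((1 - sqrt 5)/2) ^ (i+2)"
proof (induction i)
  case 0
  show ?case using sq5 by (simp add: numeral_eq_Suc power2_eq_square field_simps)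
next
  case (Suc i)
  have r1: "F (i+4) = F (i+3) + F (i+2)" using Frec[of "i+2"] by (simp add: numeral_eq_Suc)
  have r2: "F (i+2) = F (i+1) + F i" using Frec[of "i"] by (simp add: numeral_eq_Suc)
  have q: "((1 - sqrt 5)/2) ^ (i+3) = ((1 - sqrt 5)/2) ^ (i+2) + ((1 - sqrt 5)/2) ^ (i+1)"
  proof -
    have "((1 - sqrt 5)/2)^2 = (1 - sqrt 5)/2 + 1" using sq5 by (simp add: power2_eq_square field_simps)
    then show ?thesis by (rule rpow)
  qed
  have "real (F (i+4)) - (3 + sqrt 5)/2 * real (F (i+2))
     = (real (F (i+3)) - (3 + sqrt 5)/2 * real (F (i+1))) + (real (F (i+2)) - (3 + sqrt 5)/2 * real (F i))"
    unfolding of_nat_add[symmetric] r1 unfolding r2 by (simp add: field_simps)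
  then have "real (F (i+4)) - (3 + sqrt 5)/2 * real (F (i+2)) = ((1 - sqrt 5)/2) ^ (i+3)"
    using Suc.IH q by linarith
  then show ?case using Suc.IH by (simp add: numeral_eq_Suc)
qed

lemma aterm:
  assumes "i \<ge> 1"
  shows "real_of_int (a i) \<le> (3 + sqrt 5)/2 * real (F i) - real i - (1 + sqrt 5)/2"
proof -
  define q where "q = (1 - sqrt 5)/2"
  have s1: "1 < sqrt (5::real)" by (simp add: real_less_rsqrt)
  have s3: "sqrt (5::real) < 3" by (simp add: real_sqrt_less_iff real_less_lsqrt)
  have q0: "q < 0" using s1 unfolding q_def by (simp add: field_simps)
  have "-1 \<le> q" using s3 unfolding q_def by (simp add: field_simps)
  then have ab: "\<bar>q\<bar> \<le> 1" using q0 by linarith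
  have "q ^ (i+1) \<le> \<bar>q\<bar> ^ (i+1)" by (metis abs_ge_self power_abs)
  also have "\<dots> \<le> \<bar>q\<bar> ^ 2" using ab assms by (intro power_decreasing) auto
  also have "\<dots> = q * q" by (simp add: power2_eq_square)
  also have "\<dots> = (3 - sqrt 5)/2" unfolding q_def using sq5 by (simp add: field_simps)
  finally have qb: "q ^ (i+1) \<le> (3 - sqrt 5)/2" .
  have "real (F (i+2)) = (3 + sqrt 5)/2 * real (F i) + q ^ (i+1)" using conjunct1[OF ekey[of i], folded q_def] by linarith
  moreover have "real_of_int (a i) = real (F (i+2)) - real i - 2" by (simp add: a_def)
  ultimately show ?thesis using qb by (simp add: field_simps)
qed


lemma conv:
  fixes f :: "nat \<Rightarrow> 'b::comm_semiring_1"
  assumes "finite A" "S \<subseteq> A"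
  shows "(\<Sum>i\<in>A. f i * (if i \<in> S then 1 else 0)) = sum f S"
proof -
  have "(\<Sum>i\<in>A. f i * (if i \<in> S then 1 else 0)) = (\<Sum>i\<in>A. if i \<in> S then f i else 0)"
    by (rule sum.cong) auto
  also have "\<dots> = sum f (A \<inter> S)" using assms(1) by (rule sum.inter_restrict[symmetric])
  also have "A \<inter> S = S" using assms(2) by blast
  finally show ?thesis .
qed

lemma conv1:
  fixes A :: "nat set"
  assumes "finite A" "S \<subseteq> A"
  shows "(\<Sum>i\<in>A. (if i \<in> S then 1 else 0)) = card S"
  using conv[OF assms, of "\<lambda>_. 1::nat"] by simp

theorem theorem1p2:
  fixes n :: nat and ss :: "nat multiset list"
  assumes "n \<ge> 1" and "game_path n ss"
  shows "real (length ss - 1) \<le> (\<Sum>i\<in>{1..imax n}. real_of_int (a i) * real (delta n i))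
    \<and> (\<Sum>i\<in>{1..imax n}. real_of_int (a i) * real (delta n i))
        \<le> (3 + sqrt 5) / 2 * real n - real (IZ n) - (1 + sqrt 5) / 2 * real (Z n)"
proof -
  have ne: "ss \<noteq> []" using assms(2) unfolding game_path_def by blast
  define L where "L = last ss"
  have Lk: "L = ss ! (length ss - 1)" using ne by (simp add: L_def last_conv_nth)
  have inv: "Phi L \<ge> int (length ss - 1) \<and> FS L = n \<and> 0 \<notin># L"
    using path_inv[OF assms(2), of "length ss - 1"] ne Lk by simp
  have tm: "\<not> (\<exists>B. zmove L B)" using assms(2) unfolding game_path_def L_def by blast
  have tt: "(\<forall>x. count L x \<le> 1) \<and> (\<forall>i. i \<in># L \<longrightarrow> Suc i \<notin># L)"
    using terminal[OF tm] inv by blast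
  define S where "S = set_mset L"
  have fS: "finite S" using S_def by simp
  have LS: "L = mset_set S"
  proof (rule multiset_eqI)
    fix x
    show "count L x = count (mset_set S) x"
    proof (cases "x \<in> S")
      case True
      then have "count L x > 0" using S_def by simp
      moreover have "count L x \<le> 1" using tt by blast
      ultimately have "count L x = 1" by linarith
      moreover have "count (mset_set S) x = 1" using True fS by simp
      ultimately show ?thesis by simp
    next
      case False
      then show ?thesis using S_def fS by (simp add: count_mset_set(3) not_in_iff)
    qed
  qed
  have PS: "Phi L = sum a S" unfolding Phi_def LS by (simp add: sum_unfold_sum_mset)
  have FSS: "sum F S = n" using inv unfolding FS_def LS by (simp add: sum_unfold_sum_mset)
  have zp: "ZP n S" unfolding ZP_def
  proof (intro conjI)
    show "0 \<notin> S" using inv S_def by simp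
    show "\<forall>i\<in>S. Suc i \<notin> S" using tt S_def by simp
  qed (use fS FSS in auto)
  have zS: "zeck n = S" using zeck_eq[OF zp] .
  have Sne: "S \<noteq> {}" using FSS assms(1) by auto
  have im: "imax n = Max S" unfolding imax_def zS ..
  have z0: "0 \<notin> S" using inv S_def by simp
  have sub: "S \<subseteq> {1..imax n}"
  proof
    fix x assume x: "x \<in> S"
    then have "x \<noteq> 0" using z0 by metis
    then have "1 \<le> x" by (cases x) auto
    moreover have "x \<le> imax n" using x fS im by simp
    ultimately show "x \<in> {1..imax n}" by simp
  qed
  have dl: "\<And>i. real (delta n i) = (if i \<in> S then 1 else 0)" by (simp add: delta_def zS)
  have sumA: "(\<Sum>i\<in>{1..imax n}. real_of_int (a i) * real (delta n i)) = (\<Sum>i\<in>S. real_of_int (a i))"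
    unfolding dl using conv[OF _ sub, of "\<lambda>i. real_of_int (a i)"] by simp
  have IZS: "IZ n = (\<Sum>i\<in>S. i)" unfolding IZ_def delta_def zS
    using conv[OF _ sub, of "\<lambda>i. i"] by simp
  have ZS: "Z n = card S" unfolding Z_def delta_def zS using conv1[OF _ sub] by simp
  have part1: "real (length ss - 1) \<le> (\<Sum>i\<in>S. real_of_int (a i))"
  proof -
    have "int (length ss - 1) \<le> sum a S" using inv PS by simp
    then have "real_of_int (int (length ss - 1)) \<le> real_of_int (sum a S)" by (simp only: of_int_le_iff)
    then show ?thesis by simp
  qed
  have "(\<Sum>i\<in>S. real_of_int (a i)) \<le> (\<Sum>i\<in>S. (3 + sqrt 5)/2 * real (F i) - real i - (1 + sqrt 5)/2)"
  proof (rule sum_mono)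
    fix i assume "i \<in> S"
    moreover have "0 \<notin> S" using zp unfolding ZP_def by blast
    ultimately have "i \<ge> 1" by (cases i) auto
    then show "real_of_int (a i) \<le> (3 + sqrt 5)/2 * real (F i) - real i - (1 + sqrt 5)/2" by (rule aterm)
  qed
  also have "\<dots> = (3 + sqrt 5)/2 * real n - real (IZ n) - (1 + sqrt 5)/2 * real (Z n)"
    unfolding IZS ZS unfolding FSS[symmetric]
    by (simp add: sum_subtractf sum_distrib_left)
  finally show ?thesis using part1 sumA by simp
qed

end
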